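(* Let $r\ge2$, $\ell\in\mathcal M^1(\mathcal R_r)$ and $\epsilon>0$. If $\ell^i\le\epsilon$ for some $i\in[r]$, then $\ell^j>-\log(\exp(\epsilon)-1)$ for every $j\in[r]\setminus\{i\}$.
   Context: $\mathcal R_r$ is the rose with one vertex and $r$ loop edges identified with $[r]=\{1,\dots,r\}$; a length function is $\ell=(\ell^1,\dots,\ell^r)\in\mathbb R^r_{>0}$. The entropy is $\mathfrak h_{\mathcal R_r}(\ell)=\lim_{t\to\infty}\frac1t\log\#\{\gamma:\ell(\gamma)\le t\}$ over based circuits $\gamma$ (cyclically reduced closed edge paths in the oriented petals), and $\mathcal M^1(\mathcal R_r)=\{\ell:\mathfrak h_{\mathcal R_r}(\ell)=1\}$. *)

theory Defs
  imports Complex_Main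
begin

text \<open>The rose R_r: one vertex, petals indexed by {1..r}. An oriented edge is a pair
  (i, s) with i the petal and s the orientation (True = positive, False = inverse).
  An edge path is a list of oriented edges; every edge path in the rose is closed.\<close>

type_synonym rose_path = "(nat \<times> bool) list"

definition inverse_edges :: "nat \<times> bool \<Rightarrow> nat \<times> bool \<Rightarrow> bool" where
  "inverse_edges e f \<longleftrightarrow> fst e = fst f \<and> snd e \<noteq> snd f"

definition based_circuit :: "nat \<Rightarrow> rose_path \<Rightarrow> bool" where
  "based_circuit r \<gamma> \<longleftrightarrow>
     \<gamma> \<noteq> [] \<and> (\<forall>e\<in>set \<gamma>. fst e \<in> {1..r}) \<and>
     (\<forall>k. Suc k < length \<gamma> \<longrightarrow> \<not> inverse_edges (\<gamma> ! k) (\<gamma> ! Suc k)) \<and>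
     \<not> inverse_edges (last \<gamma>) (hd \<gamma>)"

definition rose_length :: "(nat \<Rightarrow> real) \<Rightarrow> rose_path \<Rightarrow> real" where
  "rose_length L \<gamma> = sum_list (map (\<lambda>e. L (fst e)) \<gamma>)"

definition rose_entropy :: "nat \<Rightarrow> (nat \<Rightarrow> real) \<Rightarrow> real" where
  "rose_entropy r L =
     Lim at_top (\<lambda>t::real. ln (real (card {\<gamma>. based_circuit r \<gamma> \<and> rose_length L \<gamma> \<le> t})) / t)"

text \<open>Length functions are positive on the petals {1..r} (values elsewhere are irrelevant).\<close>
definition rose_M1 :: "nat \<Rightarrow> (nat \<Rightarrow> real) set" where
  "rose_M1 r = {L. (\<forall>i\<in>{1..r}. 0 < L i) \<and> rose_entropy r L = 1}"

end

theory Submission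
  imports Defs "HOL-Real_Asymp.Real_Asymp"
begin


definition letters :: "nat \<Rightarrow> (nat \<times> bool) set" where
  "letters r = {1..r} \<times> UNIV"

definition red :: "nat \<Rightarrow> rose_path \<Rightarrow> bool" where
  "red r w \<longleftrightarrow> set w \<subseteq> letters r \<and> successively (\<lambda>e f. \<not> inverse_edges e f) w"

definition AA :: "nat \<Rightarrow> (nat \<Rightarrow> real) \<Rightarrow> real \<Rightarrow> rose_path set" where
  "AA r L t = {w. red r w \<and> rose_length L w \<le> t}"

lemma rl_Nil[simp]: "rose_length L [] = 0" by (simp add: rose_length_def)
lemma rl_Cons[simp]: "rose_length L (x # w) = L (fst x) + rose_length L w"
  by (simp add: rose_length_def)
lemma rl_append[simp]: "rose_length L (u @ v) = rose_length L u + rose_length L v"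
  by (simp add: rose_length_def)

lemma finite_letters: "finite (letters r)" by (simp add: letters_def)
lemma card_letters: "card (letters r) = 2 * r" by (simp add: letters_def card_cartesian_product)

lemma len_lower:
  assumes "set w \<subseteq> letters r" "\<forall>i\<in>{1..r}. \<mu> \<le> L i"
  shows "\<mu> * real (length w) \<le> rose_length L w"
  using assms
proof (induction w)
  case Nil then show ?case by simp
next
  case (Cons a w)
  then have "fst a \<in> {1..r}" by (auto simp: letters_def)
  then have "\<mu> \<le> L (fst a)" using Cons.prems(2) by blast
  moreover have "\<mu> * real (length w) \<le> rose_length L w" using Cons by auto
  ultimately show ?case by (simp add: algebra_simps)
qed

lemma finite_AA:
  assumes "0 < \<mu>" "\<forall>i\<in>{1..r}. \<mu> \<le> L i"
  shows "finite (AA r L t)"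
proof -
  have "AA r L t \<subseteq> {w. set w \<subseteq> letters r \<and> length w \<le> nat \<lfloor>t / \<mu>\<rfloor>}"
  proof
    fix w assume "w \<in> AA r L t"
    then have w: "set w \<subseteq> letters r" "rose_length L w \<le> t" by (auto simp: AA_def red_def)
    from len_lower[OF w(1) assms(2)] w(2) have "\<mu> * real (length w) \<le> t" by simp
    then have "real (length w) \<le> t / \<mu>" using assms(1) by (simp add: field_simps)
    then show "w \<in> {w. set w \<subseteq> letters r \<and> length w \<le> nat \<lfloor>t / \<mu>\<rfloor>}"
      using w(1) le_nat_floor by auto
  qed
  then show ?thesis
    using finite_lists_length_le[OF finite_letters] finite_subset by blast
qed

lemma split_len:
  "0 \<le> s \<Longrightarrow> s < rose_length L w \<Longrightarrow>
   \<exists>u x v. w = u @ x # v \<and> rose_length L u \<le> s \<and> s < rose_length L u + L (fst x)"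
proof (induction w arbitrary: s)
  case Nil then show ?case by simp
next
  case (Cons a w)
  show ?case
  proof (cases "s < L (fst a)")
    case True
    then show ?thesis using Cons.prems by (intro exI[of _ "[]"] exI[of _ a] exI[of _ w]) auto
  next
    case False
    then have "0 \<le> s - L (fst a)" "s - L (fst a) < rose_length L w" using Cons.prems by auto
    from Cons.IH[OF this] obtain u x v where
      "w = u @ x # v" "rose_length L u \<le> s - L (fst a)" "s - L (fst a) < rose_length L u + L (fst x)"
      by blast
    then show ?thesis by (intro exI[of _ "a # u"] exI[of _ x] exI[of _ v]) auto
  qed
qed

lemma red_append: "red r (u @ v) \<Longrightarrow> red r u \<and> red r v"
  by (auto simp: red_def successively_append_iff)

lemma Nil_AA: "0 \<le> t \<Longrightarrow> [] \<in> AA r L t"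
  by (simp add: AA_def red_def)

lemma AA_mono: "s \<le> t \<Longrightarrow> AA r L s \<subseteq> AA r L t"
  by (auto simp: AA_def)

lemma AA_sub:
  assumes "0 < \<mu>" "\<forall>i\<in>{1..r}. \<mu> \<le> L i" "0 \<le> s" "0 \<le> t"
  shows "real (card (AA r L (s + t))) \<le> real (2*r+1) * real (card (AA r L s)) * real (card (AA r L t))"
proof -
  let ?f = "\<lambda>(u, x, v). u @ x # (v::rose_path)"
  have fin: "\<And>t. finite (AA r L t)" using finite_AA[OF assms(1,2)] .
  have sub: "AA r L (s + t) \<subseteq> AA r L s \<union> ?f ` (AA r L s \<times> letters r \<times> AA r L t)"
  proof
    fix w assume w: "w \<in> AA r L (s + t)"
    show "w \<in> AA r L s \<union> ?f ` (AA r L s \<times> letters r \<times> AA r L t)"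
    proof (cases "rose_length L w \<le> s")
      case True then show ?thesis using w by (auto simp: AA_def)
    next
      case False
      then obtain u x v where uxv: "w = u @ x # v" "rose_length L u \<le> s"
        "s < rose_length L u + L (fst x)"
        using split_len[OF assms(3), of L w] by auto
      have "red r w" "rose_length L w \<le> s + t" using w by (auto simp: AA_def)
      then have ru: "red r u" and rxv: "red r (x # v)" using red_append uxv(1) by blast+
      then have rv: "red r v" using red_append[of r "[x]" v] by simp
      have x: "x \<in> letters r" using rxv by (auto simp: red_def)
      have "rose_length L v \<le> t" using uxv \<open>rose_length L w \<le> s + t\<close> by auto
      then have "(u, x, v) \<in> AA r L s \<times> letters r \<times> AA r L t"
        using ru rv x uxv(2) by (auto simp: AA_def)
      then show ?thesis using uxv(1) by force
    qed
  qed
  have "card (AA r L (s + t)) \<le> card (AA r L s \<union> ?f ` (AA r L s \<times> letters r \<times> AA r L t))"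
    by (rule card_mono[OF _ sub]) (use fin finite_letters in auto)
  also have "\<dots> \<le> card (AA r L s) + card (?f ` (AA r L s \<times> letters r \<times> AA r L t))"
    by (rule card_Un_le)
  also have "\<dots> \<le> card (AA r L s) + card (AA r L s \<times> letters r \<times> AA r L t)"
    using card_image_le[of "AA r L s \<times> letters r \<times> AA r L t" ?f] fin finite_letters by simp
  also have "\<dots> = card (AA r L s) + card (AA r L s) * (2 * r) * card (AA r L t)"
    by (simp add: card_cartesian_product card_letters)
  finally have 1: "real (card (AA r L (s + t))) \<le> real (card (AA r L s)) + real (card (AA r L s)) * (2 * real r) * real (card (AA r L t))"
    by (metis (mono_tags, lifting) of_nat_add of_nat_le_iff of_nat_mult of_nat_numeral)
  have "1 \<le> card (AA r L t)" using Nil_AA[OF assms(4)] fin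
    by (metis One_nat_def Suc_leI card_gt_0_iff empty_iff)
  then have "real (card (AA r L s)) \<le> real (card (AA r L s)) * real (card (AA r L t))"
    by (simp add: mult_le_cancel_left1)
  with 1 show ?thesis by (simp add: algebra_simps)
qed



lemma fekete:
  fixes G :: "real \<Rightarrow> real"
  assumes mono: "\<And>s t. 0 \<le> s \<Longrightarrow> s \<le> t \<Longrightarrow> G s \<le> G t"
    and sub: "\<And>s t. 0 \<le> s \<Longrightarrow> 0 \<le> t \<Longrightarrow> G (s + t) \<le> G s + G t"
    and nn: "\<And>t. 0 \<le> t \<Longrightarrow> 0 \<le> G t"
  shows "\<exists>l. ((\<lambda>t. G t / t) \<longlongrightarrow> l) at_top"
proof -
  let ?S = "(\<lambda>t. G t / t) ` {0<..}"
  define l where "l = Inf ?S"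
  have bdd: "bdd_below ?S" by (rule bdd_belowI[of _ 0]) (auto intro!: divide_nonneg_pos nn)
  have lower: "l \<le> G t / t" if "0 < t" for t
    unfolding l_def using bdd that by (intro cInf_lower) auto
  have mult0: "G (real (Suc n) * T) \<le> real (Suc n) * G T" if "0 \<le> T" for n T
  proof (induction n)
    case 0 show ?case by simp
  next
    case (Suc n)
    have "G (real (Suc (Suc n)) * T) = G (real (Suc n) * T + T)" by (simp add: algebra_simps)
    also have "\<dots> \<le> G (real (Suc n) * T) + G T" using sub that by simp
    finally show ?case using Suc by (simp add: algebra_simps)
  qed
  have mult: "G (real n * T) \<le> real n * G T" if "0 \<le> T" "1 \<le> n" for n T
    using mult0[OF that(1), of "n - 1"] that(2) by simp
  have "((\<lambda>t. G t / t) \<longlongrightarrow> l) at_top"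
  proof (rule tendstoI)
    fix e :: real assume e: "0 < e"
    have "?S \<noteq> {}" by auto
    from cInf_lessD[OF this, of "l + e/2"] e obtain T where T: "0 < T" "G T / T < l + e/2"
      unfolding l_def by auto
    show "\<forall>\<^sub>F t in at_top. dist (G t / t) l < e"
    proof (rule eventually_at_top_linorderI[of "T + 2 * G T / e + 1"])
      fix t assume t: "T + 2 * G T / e + 1 \<le> t"
      have GT: "0 \<le> G T" using nn T by simp
      have "0 \<le> 2 * G T / e" using GT e by simp
      then have tT: "T < t" "0 < t" using t T by linarith+
      define n where "n = nat \<lfloor>t / T\<rfloor>"
      have nT: "real n * T \<le> t"
        using T tT by (simp add: n_def) (metis floor_divide_lower floor_le_zero le_less_linear mult_nonpos_nonneg of_int_floor_le of_nat_0_le_iff order_trans)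
      have rT: "t - real n * T < T"
      proof -
        have "t / T < real_of_int \<lfloor>t/T\<rfloor> + 1" by linarith
        moreover have "real_of_int \<lfloor>t/T\<rfloor> = real n" using tT T by (simp add: n_def)
        ultimately have "t / T < real n + 1" by simp
        then show ?thesis using T by (simp add: field_simps)
      qed
      have n1: "1 \<le> n"
      proof -
        have "1 \<le> t / T" using tT T by simp
        then show ?thesis unfolding n_def by linarith
      qed
      have "G t = G (real n * T + (t - real n * T))" by simp
      also have "\<dots> \<le> G (real n * T) + G (t - real n * T)"
        using sub[of "real n * T" "t - real n * T"] nT T by simp
      also have "\<dots> \<le> real n * G T + G T"
        using mult[of T n] n1 T mono[of "t - real n * T" T] nT rT by (simp add: add_mono)
      finally have Gt: "G t \<le> (real n + 1) * G T" by (simp add: algebra_simps)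
      have "real n \<le> t / T" using nT T by (simp add: field_simps)
      then have "(real n + 1) * G T \<le> (t / T + 1) * G T" using GT by (simp add: mult_right_mono)
      with Gt have "G t / t \<le> (t / T + 1) * G T / t" using tT by (simp add: divide_right_mono)
      also have "\<dots> = G T / T + G T / t" using tT T by (simp add: field_simps)
      also have "G T / t < e / 2"
      proof -
        have "2 * G T / e < t" using t T by linarith
        then have "2 * G T < t * e" using e by (simp add: field_simps)
        then show ?thesis using tT by (simp add: field_simps)
      qed
      finally have up: "G t / t < l + e" using T(2) by linarith
      have lo: "l \<le> G t / t" using lower tT by simp
      show "dist (G t / t) l < e" using up lo by (simp add: dist_real_def)
    qed
  qed
  then show ?thesis by blast
qed



lemma connector:
  assumes "2 \<le> r"
  shows "\<exists>c\<in>letters r. \<not> inverse_edges e c \<and> \<not> inverse_edges c f"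
proof -
  have l1: "(1, b) \<in> letters r" "(2, b) \<in> letters r" for b using assms by (auto simp: letters_def)
  show ?thesis
  proof (cases "fst f = 1")
    case False
    then show ?thesis using l1 by (intro bexI[of _ "(1, snd e)"]) (auto simp: inverse_edges_def)
  next
    case f1: True
    show ?thesis
    proof (cases "fst e = 1")
      case False
      then show ?thesis using l1 f1 by (intro bexI[of _ "(1, snd f)"]) (auto simp: inverse_edges_def)
    next
      case True
      then show ?thesis using l1 f1 by (intro bexI[of _ "(2, True)"]) (auto simp: inverse_edges_def)
    qed
  qed
qed

lemma set_letters: "set w \<subseteq> letters r \<longleftrightarrow> (\<forall>e\<in>set w. fst e \<in> {1..r})"
  unfolding letters_def by (metis UNIV_I mem_Times_iff prod.collapse subset_iff)

lemma bc_iff: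
  "based_circuit r \<gamma> \<longleftrightarrow> \<gamma> \<noteq> [] \<and> red r \<gamma> \<and> \<not> inverse_edges (last \<gamma>) (hd \<gamma>)"
  unfolding based_circuit_def red_def set_letters successively_conv_nth
  by (rule iffI; elim conjE; intro conjI; assumption)

definition NN :: "nat \<Rightarrow> (nat \<Rightarrow> real) \<Rightarrow> real \<Rightarrow> rose_path set" where
  "NN r L t = {\<gamma>. based_circuit r \<gamma> \<and> rose_length L \<gamma> \<le> t}"

lemma NN_sub: "NN r L t \<subseteq> AA r L t"
  unfolding NN_def AA_def bc_iff by blast

lemma AA_le_NN:
  assumes "2 \<le> r" "0 < \<mu>" "\<forall>i\<in>{1..r}. \<mu> \<le> L i" "\<forall>i\<in>{1..r}. L i \<le> M"
  shows "card (AA r L t) \<le> 1 + card (NN r L (t + M))"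
proof -
  define C where "C w = (SOME c. c \<in> letters r \<and> \<not> inverse_edges (last w) c \<and> \<not> inverse_edges c (hd w))" for w
  have C: "C w \<in> letters r \<and> \<not> inverse_edges (last w) (C w) \<and> \<not> inverse_edges (C w) (hd w)" for w
  proof -
    from connector[OF assms(1), of "last w" "hd w"] obtain c where
      "c \<in> letters r \<and> \<not> inverse_edges (last w) c \<and> \<not> inverse_edges c (hd w)" by blast
    then show ?thesis unfolding C_def by (rule someI)
  qed
  have fin: "finite (NN r L (t + M))" by (rule finite_subset[OF NN_sub finite_AA[OF assms(2,3)]])
  have inj: "inj_on (\<lambda>w. w @ [C w]) (AA r L t - {[]})"
    by (rule inj_onI) (metis butlast_snoc)
  have img: "(\<lambda>w. w @ [C w]) ` (AA r L t - {[]}) \<subseteq> NN r L (t + M)"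
  proof
    fix x assume "x \<in> (\<lambda>w. w @ [C w]) ` (AA r L t - {[]})"
    then obtain w where w: "w \<in> AA r L t" "w \<noteq> []" and x: "x = w @ [C w]" by auto
    have rw: "red r w" "rose_length L w \<le> t" using w by (auto simp: AA_def)
    have Cw: "C w \<in> letters r" using C by blast
    then have "fst (C w) \<in> {1..r}" by (auto simp: letters_def)
    then have LC: "L (fst (C w)) \<le> M" using assms(4) by blast
    have "red r x" using rw Cw C[of w] w(2) unfolding x red_def
      by (auto simp: successively_append_iff)
    moreover have "\<not> inverse_edges (last x) (hd x)" using C[of w] w(2) by (simp add: x)
    ultimately show "x \<in> NN r L (t + M)" using rw LC by (auto simp: NN_def bc_iff x)
  qed
  have "card (AA r L t) \<le> card (AA r L t - {[]}) + 1"
    using card_Diff1_le[of "AA r L t" "[]"] finite_AA[OF assms(2,3)]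
    by (cases "[] \<in> AA r L t") (auto simp: card_Diff_singleton_if)
  also have "card (AA r L t - {[]}) \<le> card (NN r L (t + M))"
    using card_inj_on_le[OF inj img fin] .
  finally show ?thesis by simp
qed

definition SS :: "(nat \<Rightarrow> real) \<Rightarrow> nat \<Rightarrow> nat \<Rightarrow> real \<Rightarrow> rose_path set" where
  "SS L i j t = {w. set w \<subseteq> {(i, True), (j, True)} \<and> rose_length L w \<le> t}"

lemma SS_sub:
  assumes "i \<in> {1..r}" "j \<in> {1..r}"
  shows "SS L i j t \<subseteq> AA r L t"
proof
  fix w assume w: "w \<in> SS L i j t"
  then have s: "set w \<subseteq> {(i, True), (j, True)}" by (simp add: SS_def)
  have "successively (\<lambda>e f. \<not> inverse_edges e f) w"
    unfolding successively_conv_nth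
  proof (intro allI impI)
    fix k assume "Suc k < length w"
    then have "w ! k \<in> set w" "w ! Suc k \<in> set w" by auto
    then show "\<not> inverse_edges (w ! k) (w ! Suc k)" using s by (auto simp: inverse_edges_def)
  qed
  moreover have "set w \<subseteq> letters r" using s assms by (auto simp: letters_def)
  ultimately show "w \<in> AA r L t" using w by (auto simp: AA_def red_def SS_def)
qed

lemma SS_lower:
  assumes ij: "i \<noteq> j" and a: "0 < L i" and b: "0 < L j" and c: "0 < c"
    and phi: "1 \<le> exp (- c * L i) + exp (- c * L j)"
    and fin: "\<And>t. finite (SS L i j t)"
  shows "0 \<le> t \<Longrightarrow> exp (c * (t - max (L i) (L j))) \<le> real (card (SS L i j t))"
proof -
  define m where "m = max (L i) (L j)"
  define \<mu> where "\<mu> = min (L i) (L j)"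
  have mu: "0 < \<mu>" using a b by (simp add: \<mu>_def)
  have main: "\<forall>t. 0 \<le> t \<longrightarrow> t < real n * \<mu> \<longrightarrow> exp (c * (t - m)) \<le> real (card (SS L i j t))" for n
  proof (induction n)
    case 0 then show ?case using mu by auto
  next
    case (Suc n)
    show ?case
    proof (intro allI impI)
      fix t assume t: "0 \<le> t" "t < real (Suc n) * \<mu>"
      show "exp (c * (t - m)) \<le> real (card (SS L i j t))"
      proof (cases "t < m")
        case True
        have "c * (t - m) \<le> 0" using True c by (simp add: mult_nonneg_nonpos)
        then have "exp (c * (t - m)) \<le> 1" by simp
        moreover have "[] \<in> SS L i j t" using t by (simp add: SS_def)
        then have "1 \<le> card (SS L i j t)" using fin
          by (metis One_nat_def Suc_leI card_gt_0_iff empty_iff)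
        ultimately show ?thesis by linarith
      next
        case False
        then have ge: "L i \<le> t" "L j \<le> t" by (auto simp: m_def)
        have lt: "t - L i < real n * \<mu>" "t - L j < real n * \<mu>"
          using t by (auto simp: \<mu>_def algebra_simps)
        have IH1: "exp (c * (t - L i - m)) \<le> real (card (SS L i j (t - L i)))"
          using Suc.IH ge lt by simp
        have IH2: "exp (c * (t - L j - m)) \<le> real (card (SS L i j (t - L j)))"
          using Suc.IH ge lt by simp
        have sub: "Cons (i, True) ` SS L i j (t - L i) \<union> Cons (j, True) ` SS L i j (t - L j) \<subseteq> SS L i j t"
          by (auto simp: SS_def)
        have disj: "Cons (i, True) ` SS L i j (t - L i) \<inter> Cons (j, True) ` SS L i j (t - L j) = {}"
          using ij by auto
        have "card (SS L i j (t - L i)) + card (SS L i j (t - L j))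
              = card (Cons (i, True) ` SS L i j (t - L i) \<union> Cons (j, True) ` SS L i j (t - L j))"
          using disj fin by (simp add: card_Un_disjoint card_image)
        also have "\<dots> \<le> card (SS L i j t)" by (rule card_mono[OF fin sub])
        finally have cs: "real (card (SS L i j (t - L i))) + real (card (SS L i j (t - L j))) \<le> real (card (SS L i j t))"
          by linarith
        have "exp (c * (t - m)) \<le> exp (c * (t - m)) * (exp (- c * L i) + exp (- c * L j))"
          using phi by simp
        also have "\<dots> = exp (c * (t - L i - m)) + exp (c * (t - L j - m))"
          by (simp add: distrib_left exp_add[symmetric] algebra_simps)
        finally show ?thesis using IH1 IH2 cs by linarith
      qed
    qed
  qed
  assume t: "0 \<le> t"
  obtain n :: nat where "t / \<mu> < real n" using reals_Archimedean2 by blast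
  then have "t < real n * \<mu>" using mu by (simp add: field_simps)
  then show ?thesis using main t by (simp add: m_def)
qed



theorem mainTheorem16:
  fixes r :: nat and L :: "nat \<Rightarrow> real" and eps :: real and i j :: nat
  assumes "r \<ge> 2" and "L \<in> rose_M1 r" and "eps > 0"
    and "i \<in> {1..r}" and "L i \<le> eps"
    and "j \<in> {1..r}" and "j \<noteq> i"
  shows "L j > - ln (exp eps - 1)"
proof (rule ccontr)
  assume neg: "\<not> L j > - ln (exp eps - 1)"
  note r2 = assms(1) and ir = assms(4) and jr = assms(6)
  have pos: "\<forall>k\<in>{1..r}. 0 < L k" and ent: "rose_entropy r L = 1"
    using assms(2) by (auto simp: rose_M1_def)
  have ne: "L ` {1..r} \<noteq> {}" using r2 by auto
  define \<mu> where "\<mu> = Min (L ` {1..r})"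
  have mu: "0 < \<mu>" "\<forall>k\<in>{1..r}. \<mu> \<le> L k"
    using Min_in[OF _ ne] pos by (auto simp: \<mu>_def)
  define M where "M = Max (L ` {1..r})"
  have MM: "\<forall>k\<in>{1..r}. L k \<le> M" by (auto simp: M_def)
  have M0: "0 \<le> M" using MM pos ir by force
  have a: "0 < L i" and b: "0 < L j" using pos ir jr by auto
  have phi1: "1 < exp (- L i) + exp (- L j)"
  proof -
    have e1: "0 < exp eps - 1" using assms(3) by simp
    have "ln (exp eps - 1) \<le> - L j" using neg by linarith
    then have "exp eps - 1 \<le> exp (- L j)" using e1 by (metis exp_le_cancel_iff exp_ln)
    moreover have "exp (L i) \<le> exp eps" using assms(5) by simp
    ultimately have "exp (L i) \<le> 1 + exp (- L j)" by linarith
    then have "exp (- L i) * exp (L i) \<le> exp (- L i) * (1 + exp (- L j))"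
      by (simp add: mult_left_mono)
    then have "1 \<le> exp (- L i) + exp (- L i) * exp (- L j)"
      by (simp add: exp_minus field_simps)
    moreover have "exp (- L i) * exp (- L j) < exp (- L j)" using a by simp
    ultimately show ?thesis by linarith
  qed
  define \<delta> where "\<delta> = (exp (- L i) + exp (- L j) - 1) / (L i + L j)"
  define c where "c = 1 + \<delta>"
  have d0: "0 < \<delta>" using phi1 a b by (simp add: \<delta>_def)
  have c1: "1 < c" using d0 by (simp add: c_def)
  have phic: "1 \<le> exp (- c * L i) + exp (- c * L j)"
  proof -
    have lb: "exp (- x) * (1 - \<delta> * x) \<le> exp (- c * x)" if "0 < x" for x
    proof -
      have "1 + (- \<delta> * x) \<le> exp (- \<delta> * x)" by (rule exp_ge_add_one_self)
      then have "exp (- x) * (1 - \<delta> * x) \<le> exp (- x) * exp (- \<delta> * x)"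
        by (simp add: mult_left_mono)
      also have "\<dots> = exp (- c * x)" by (simp add: c_def exp_add[symmetric] algebra_simps)
      finally show ?thesis .
    qed
    have x1: "exp (- x) * (1 - \<delta> * x) \<ge> exp (- x) - \<delta> * x" if "0 < x" for x
    proof -
      have "exp (- x) \<le> 1" using that by simp
      then have "exp (- x) * (\<delta> * x) \<le> \<delta> * x" using d0 that
        by (simp add: mult_left_le_one_le)
      then show ?thesis by (simp add: algebra_simps)
    qed
    have "1 = exp (- L i) + exp (- L j) - \<delta> * (L i + L j)"
      using a b by (simp add: \<delta>_def)
    also have "\<dots> \<le> exp (- c * L i) + exp (- c * L j)"
      using lb[OF a] lb[OF b] x1[OF a] x1[OF b] by (simp add: algebra_simps)
    finally show ?thesis .
  qed
  define B where "B t = real (card (AA r L t))" for t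
  define K where "K = real (2 * r + 1)"
  define G where "G t = ln (K * B t)" for t
  have finA: "\<And>t. finite (AA r L t)" using finite_AA[OF mu] .
  have K1: "1 \<le> K" by (simp add: K_def)
  have B1: "1 \<le> B t" if "0 \<le> t" for t
  proof -
    have "[] \<in> AA r L t" using Nil_AA[OF that] .
    then have "0 < card (AA r L t)" using finA card_gt_0_iff by blast
    then show ?thesis by (simp add: B_def)
  qed
  have Bmono: "B s \<le> B t" if "s \<le> t" for s t
    unfolding B_def using card_mono[OF finA AA_mono[OF that]] by simp
  have Bsub: "B (s + t) \<le> K * B s * B t" if "0 \<le> s" "0 \<le> t" for s t
    using AA_sub[OF mu that] by (simp add: B_def K_def)
  have KB1: "1 \<le> K * B t" if "0 \<le> t" for t
    using K1 B1[OF that] by (metis mult_mono' mult_1_right zero_le_one order_trans)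
  have KB0: "0 < K * B t" if "0 \<le> t" for t
    using KB1[OF that] by linarith
  obtain l where lim: "((\<lambda>t. G t / t) \<longlongrightarrow> l) at_top"
  proof -
    have "\<exists>l. ((\<lambda>t. G t / t) \<longlongrightarrow> l) at_top"
    proof (rule fekete)
      fix s t :: real assume "0 \<le> s" "s \<le> t"
      then have st: "0 \<le> s" "0 \<le> t" "s \<le> t" by auto
      have "K * B s \<le> K * B t" using Bmono[OF st(3)] K1 by (simp add: mult_left_mono)
      moreover have "0 < K * B s" "0 < K * B t" using KB1 st by (auto intro: less_le_trans[OF zero_less_one])
      ultimately show "G s \<le> G t" unfolding G_def by simp
    next
      fix s t :: real assume st: "0 \<le> s" "0 \<le> t"
      have "K * B (s + t) \<le> (K * B s) * (K * B t)"
        using Bsub[OF st] K1 B1 st by (simp add: mult_left_mono algebra_simps)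
      then have "ln (K * B (s + t)) \<le> ln ((K * B s) * (K * B t))"
        using KB0[of "s+t"] KB0[of s] KB0[of t] st by simp
      also have "\<dots> = ln (K * B s) + ln (K * B t)"
        using ln_mult_pos[OF KB0[OF st(1)] KB0[OF st(2)]] .
      finally show "G (s + t) \<le> G s + G t" by (simp add: G_def)
    next
      fix t :: real assume "0 \<le> t"
      then show "0 \<le> G t" using KB1 by (simp add: G_def)
    qed
    then show ?thesis using that by blast
  qed
  define m where "m = max (L i) (L j)"
  have finS: "\<And>t. finite (SS L i j t)" using finA SS_sub[OF ir jr] finite_subset by metis
  have Bexp: "exp (c * (t - m)) \<le> B t" if "0 \<le> t" for t
  proof -
    have "exp (c * (t - m)) \<le> real (card (SS L i j t))"
      using SS_lower[OF assms(7)[symmetric] a b _ phic finS that] c1 by (simp add: m_def)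
    also have "\<dots> \<le> B t" unfolding B_def using card_mono[OF finA SS_sub[OF ir jr]] by simp
    finally show ?thesis .
  qed
  have GlnB: "ln (B t) \<le> G t" if "0 \<le> t" for t
  proof -
    have "ln (K * B t) = ln K + ln (B t)" using K1 B1[OF that] by (intro ln_mult_pos) auto
    moreover have "0 \<le> ln K" using K1 by simp
    ultimately show ?thesis by (simp add: G_def)
  qed
  have lc: "c \<le> l"
  proof (rule tendsto_le[OF _ lim])
    show "((\<lambda>t. c * (t - m) / t) \<longlongrightarrow> c) at_top" by real_asymp
    show "\<forall>\<^sub>F t in at_top. c * (t - m) / t \<le> G t / t"
    proof (rule eventually_at_top_linorderI[of 1])
      fix t :: real assume t: "1 \<le> t"
      have "c * (t - m) = ln (exp (c * (t - m)))" by simp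
      also have "\<dots> \<le> ln (B t)"
      proof -
        have "0 < exp (c * (t - m))" by simp
        moreover have "exp (c * (t - m)) \<le> B t" using Bexp[of t] t by simp
        moreover have "0 < B t" using B1[of t] t by simp
        ultimately show ?thesis using ln_le_cancel_iff[of "exp (c * (t - m))" "B t"] by simp
      qed
      also have "\<dots> \<le> G t" using GlnB t by simp
      finally show "c * (t - m) / t \<le> G t / t" using t by (simp add: divide_right_mono)
    qed
  qed simp
  define N where "N t = real (card (NN r L t))" for t
  define D where "D = 2 * K * B M"
  have D2: "2 \<le> D" using KB1[OF M0] by (simp add: D_def)
  define C1 where "C1 = ln K + ln D"
  have fN: "((\<lambda>t. ln (N t) / t) \<longlongrightarrow> l) at_top"
  proof (rule tendsto_sandwich)
    show "\<forall>\<^sub>F t in at_top. (G t - C1) / t \<le> ln (N t) / t"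
    proof (rule eventually_at_top_linorderI[of "max (max M 1) (m + ln D / c)"])
      fix t :: real assume t: "max (max M 1) (m + ln D / c) \<le> t"
      then have tM: "M \<le> t" and t1: "1 \<le> t" and tD: "m + ln D / c \<le> t" by auto
      have "B t = B ((t - M) + M)" by simp
      also have "\<dots> \<le> K * B (t - M) * B M" using Bsub[of "t - M" M] tM M0 by simp
      finally have 1: "B t \<le> K * B M * B (t - M)" by (simp add: algebra_simps)
      have "card (AA r L (t - M)) \<le> 1 + card (NN r L (t - M + M))"
        using AA_le_NN[OF r2 mu MM] .
      then have 2: "B (t - M) \<le> 1 + N t" by (simp add: B_def N_def)
      have KBM: "0 < K * B M" using KB1[OF M0] by simp
      have "ln D \<le> c * (t - m)" using tD c1 by (simp add: field_simps)
      then have "D \<le> exp (c * (t - m))" using D2 by (metis exp_le_cancel_iff exp_ln less_le_trans zero_less_numeral)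
      then have BD: "D \<le> B t" using Bexp[of t] t1 by simp
      have "B t / D \<le> N t"
      proof -
        have "B t \<le> K * B M * (1 + N t)" using 1 2 KBM
          by (meson mult_left_mono less_imp_le order_trans)
        then have x1: "B t / (K * B M) \<le> 1 + N t" using KBM by (simp add: field_simps)
        have x2: "B t / D = B t / (K * B M) / 2" by (simp add: D_def)
        have x3: "1 \<le> B t / (K * B M) / 2" using BD KBM by (simp add: D_def field_simps)
        have gen: "\<And>x y::real. x \<le> 1 + N t \<Longrightarrow> y = x / 2 \<Longrightarrow> 1 \<le> x / 2 \<Longrightarrow> y \<le> N t"
          by linarith
        show ?thesis by (rule gen[OF x1 x2 x3])
      qed
      moreover have "0 < B t / D" using BD D2 by simp
      ultimately have "ln (B t / D) \<le> ln (N t)" by (subst ln_le_cancel_iff) auto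
      moreover have "ln (B t / D) = ln (B t) - ln D" using BD D2 by (intro ln_divide_pos) auto
      moreover have "G t = ln K + ln (B t)" using K1 B1[of t] t1 unfolding G_def by (intro ln_mult_pos) auto
      ultimately have "G t - C1 \<le> ln (N t)" by (simp add: C1_def)
      then show "(G t - C1) / t \<le> ln (N t) / t" using t1 by (simp add: divide_right_mono)
    qed
    show "\<forall>\<^sub>F t in at_top. ln (N t) / t \<le> G t / t"
    proof (rule eventually_at_top_linorderI[of 1])
      fix t :: real assume t1: "1 \<le> t"
      have NB: "N t \<le> B t" unfolding N_def B_def using card_mono[OF finA NN_sub] by simp
      have "ln (N t) \<le> ln (B t)"
      proof (cases "N t = 0")
        case True then show ?thesis using B1[of t] t1 by simp
      next
        case False
        then have "0 < N t" by (simp add: N_def)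
        then show ?thesis using NB by (subst ln_le_cancel_iff) auto
      qed
      then have "ln (N t) \<le> G t" using GlnB[of t] t1 by simp
      then show "ln (N t) / t \<le> G t / t" using t1 by (simp add: divide_right_mono)
    qed
    have "((\<lambda>t. G t / t - C1 / t) \<longlongrightarrow> l - 0) at_top"
      by (intro tendsto_diff lim) real_asymp
    then show "((\<lambda>t. (G t - C1) / t) \<longlongrightarrow> l) at_top" by (simp add: diff_divide_distrib)
    show "((\<lambda>t. G t / t) \<longlongrightarrow> l) at_top" by (rule lim)
  qed
  have "rose_entropy r L = l"
    unfolding rose_entropy_def using fN by (intro tendsto_Lim) (simp_all add: N_def NN_def)
  with ent lc c1 show False by simp
qed

end
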